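(* Let $H^2\times H^2$ carry the product metric $\rho(\mathsf z,\mathsf w)=\sqrt{d_H(z_1,w_1)^2+d_H(z_2,w_2)^2}$, and for $\mathsf z,\mathsf w\in H^2\times H^2$ let $E(\mathsf z,\mathsf w)=\{\mathsf x: \rho(\mathsf x,\mathsf z)=\rho(\mathsf x,\mathsf w)\}$. For distinct $z,w\in H^2$ and $k\in\mathbb R$ let $S_k(z,w)=\{x\in H^2: d_H(x,z)^2-d_H(x,w)^2=k\}$, and for $\mathsf z=(z_1,z_2)$, $\mathsf w=(w_1,w_2)$ with $z_i\neq w_i$ let $E_k(\mathsf z,\mathsf w)=S_k(z_1,w_1)\times S_k(w_2,z_2)$; the spine of $E(\mathsf z,\mathsf w)$ is $E_0(\mathsf z,\mathsf w)$. For an isometry $\gamma$ of $H^2\times H^2$ and $\mathsf x\in H^2\times H^2$, a point $\mathsf y$ is called $\gamma$-visible to $\mathsf x$ if $\rho(\mathsf y,\mathsf x)\le\rho(\mathsf y,\gamma(\mathsf x))$ and $\rho(\mathsf y,\mathsf x)\le \rho(\mathsf y,\gamma^{-1}(\mathsf x))$, and $\gamma$-invisible otherwise; a set is $\gamma$-invisible to $\mathsf x$ if each of its points is. Let $\mathsf x,\mathsf y\in H^2\times H^2$ (with distinct coordinates, so that the spine is defined) and let $\gamma$ be an isometry of $H^2\times H^2$. Suppose $E(\mathsf x,\mathsf y)\cap E(\mathsf x,\gamma(\mathsf x))=\emptyset$ and $E(\mathsf x,\mathsf y)\cap E(\mathsf x,\gamma^{-1}(\mathsf x))=\emptyset$.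 Then $E(\mathsf x,\mathsf y)$ is $\gamma$-invisible to $\mathsf x$ if and only if the spine $E_0(\mathsf x,\mathsf y)$ is $\gamma$-invisible to $\mathsf x$.
   Context: $d_H$ is the hyperbolic distance on the hyperbolic plane $H^2$. *)

theory Defs
  imports "HOL-Analysis.Analysis"
begin

definition H2 :: "complex set" where
  "H2 = {z. Im z > 0}"

definition dH :: "complex \<Rightarrow> complex \<Rightarrow> real" where
  "dH z w = arcosh (1 + (cmod (z - w))^2 / (2 * Im z * Im w))"

definition HH :: "(complex \<times> complex) set" where
  "HH = H2 \<times> H2"

definition rho :: "complex \<times> complex \<Rightarrow> complex \<times> complex \<Rightarrow> real" where
  "rho z w = sqrt ((dH (fst z) (fst w))^2 + (dH (snd z) (snd w))^2)"

definition bisector :: "complex \<times> complex \<Rightarrow> complex \<times> complex \<Rightarrow> (complex \<times> complex) set" where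
  "bisector z w = {x \<in> HH. rho x z = rho x w}"

definition Sk :: "real \<Rightarrow> complex \<Rightarrow> complex \<Rightarrow> complex set" where
  "Sk k z w = {x \<in> H2. (dH x z)^2 - (dH x w)^2 = k}"

definition Ek :: "real \<Rightarrow> complex \<times> complex \<Rightarrow> complex \<times> complex \<Rightarrow> (complex \<times> complex) set" where
  "Ek k z w = Sk k (fst z) (fst w) \<times> Sk k (snd w) (snd z)"

definition spine :: "complex \<times> complex \<Rightarrow> complex \<times> complex \<Rightarrow> (complex \<times> complex) set" where
  "spine z w = Ek 0 z w"

definition isometry_HH :: "(complex \<times> complex \<Rightarrow> complex \<times> complex) \<Rightarrow> bool" where
  "isometry_HH g \<longleftrightarrow> bij_betw g HH HH \<and> (\<forall>x\<in>HH. \<forall>y\<in>HH. rho (g x) (g y) = rho x y)"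

definition iso_inv :: "(complex \<times> complex \<Rightarrow> complex \<times> complex) \<Rightarrow> complex \<times> complex \<Rightarrow> complex \<times> complex" where
  "iso_inv g = the_inv_into HH g"

definition visible :: "(complex \<times> complex \<Rightarrow> complex \<times> complex) \<Rightarrow> complex \<times> complex \<Rightarrow> complex \<times> complex \<Rightarrow> bool" where
  "visible g x y \<longleftrightarrow> rho y x \<le> rho y (g x) \<and> rho y x \<le> rho y (iso_inv g x)"

definition set_invisible :: "(complex \<times> complex \<Rightarrow> complex \<times> complex) \<Rightarrow> complex \<times> complex \<Rightarrow> (complex \<times> complex) set \<Rightarrow> bool" where
  "set_invisible g x A \<longleftrightarrow> (\<forall>y\<in>A. \<not> visible g x y)"

end

theory Submission imports Defs begin

definition mob :: "real \<Rightarrow> real \<Rightarrow> real \<Rightarrow> real \<Rightarrow> complex \<Rightarrow> complex" where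
  "mob A B C D a = (of_real A * a + of_real B) / (of_real C * a + of_real D)"

lemma mob_den_nz:
  assumes "Im a > 0" "A*D - B*C > 0"
  shows "of_real C * a + of_real D \<noteq> 0"
proof
  assume h: "of_real C * a + of_real D = 0"
  hence "Im (of_real C * a + of_real D) = 0" by simp
  hence "C = 0" using assms by simp
  with h have "D = 0" by (metis add_0 complex_of_real_mult_Complex mult_zero_left of_real_0 of_real_eq_0_iff)
  with \<open>C=0\<close> assms show False by simp
qed

lemma mob_Im:
  assumes "Im a > 0" "A*D - B*C > 0"
  shows "Im (mob A B C D a) = (A*D - B*C) * Im a / (cmod (of_real C * a + of_real D))^2"
proof -
  obtain x y where a: "a = Complex x y" by (cases a)
  show ?thesis unfolding mob_def a
    by (simp add: Im_divide cmod_power2 field_simps complex_eq_iff)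
qed

lemma mob_diff:
  assumes "Im a > 0" "Im b > 0" "A*D - B*C > 0"
  shows "mob A B C D a - mob A B C D b = of_real (A*D - B*C) * (a - b) / ((of_real C * a + of_real D) * (of_real C * b + of_real D))"
  using mob_den_nz[OF assms(1,3)] mob_den_nz[OF assms(2,3)]
  unfolding mob_def by (simp add: field_simps)

lemma mob_H2:
  assumes "Im a > 0" "A*D - B*C > 0"
  shows "Im (mob A B C D a) > 0"
  using mob_Im[OF assms] mob_den_nz[OF assms] assms by simp

lemma mob_dH:
  assumes "Im a > 0" "Im b > 0" "A*D - B*C > 0"
  shows "dH (mob A B C D a) (mob A B C D b) = dH a b"
proof -
  let ?d = "A*D - B*C"
  let ?p = "cmod (of_real C * a + of_real D)" and ?q = "cmod (of_real C * b + of_real D)"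
  have p: "?p > 0" using mob_den_nz[OF assms(1,3)] by simp
  have q: "?q > 0" using mob_den_nz[OF assms(2,3)] by simp
  have "cmod (mob A B C D a - mob A B C D b) = ?d * cmod (a-b) / (?p * ?q)"
    unfolding mob_diff[OF assms] using assms(3) by (simp add: norm_divide norm_mult del: of_real_diff of_real_mult)
  moreover have "Im (mob A B C D a) = ?d * Im a / ?p^2" by (rule mob_Im[OF assms(1,3)])
  moreover have "Im (mob A B C D b) = ?d * Im b / ?q^2" by (rule mob_Im[OF assms(2,3)])
  moreover have gen: "\<And>d n p q ia ib::real. d > 0 \<Longrightarrow> p > 0 \<Longrightarrow> q > 0 \<Longrightarrow> ia > 0 \<Longrightarrow> ib > 0 \<Longrightarrow>
     (d*n/(p*q))^2/(2*(d*ia/p^2)*(d*ib/q^2)) = n^2/(2*ia*ib)"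
    by (simp add: field_simps power2_eq_square)
  ultimately have "(cmod (mob A B C D a - mob A B C D b))^2 / (2 * Im (mob A B C D a) * Im (mob A B C D b))
     = (cmod (a-b))^2 / (2 * Im a * Im b)" using p q assms
    by (simp only:)
  thus ?thesis unfolding dH_def by simp
qed

lemma mob_inv:
  assumes "Im a > 0" "A*D - B*C > 0"
  shows "mob D (-B) (-C) A (mob A B C D a) = a"
proof -
  let ?e = "of_real C * a + of_real D"
  have e: "?e \<noteq> 0" using mob_den_nz[OF assms] .
  have d: "of_real (A*D - B*C) \<noteq> (0::complex)" using assms by (simp only: of_real_eq_0_iff)
  have n: "of_real D * ((of_real A * a + of_real B) / ?e) + of_real (-B) = of_real (A*D-B*C) * a / ?e"
    using e by (simp add: field_simps)
  have m: "of_real (-C) * ((of_real A * a + of_real B) / ?e) + of_real A = of_real (A*D-B*C) / ?e"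
    using e by (simp add: field_simps)
  show ?thesis unfolding mob_def n m using e d by simp
qed


lemma normalize:
  assumes "Im z > 0" "Im w > 0" "z \<noteq> w"
  shows "\<exists>A B C D. A*D - B*C > 0 \<and> Re (mob A B C D z) = 0 \<and> Re (mob A B C D w) = 0"
proof (cases "Re z = Re w")
  case True
  show ?thesis
    by (rule exI[of _ 1], rule exI[of _ "- Re z"], rule exI[of _ 0], rule exI[of _ 1])
       (simp add: mob_def True)
next
  case False
  define c where "c = ((cmod w)^2 - (cmod z)^2) / (2 * (Re w - Re z))"
  define R where "R = cmod (z - of_real c)"
  have hw: "(cmod (w - of_real c))^2 = (Re w - c)^2 + (Im w)^2" by (simp add: cmod_power2)
  have hz: "(cmod (z - of_real c))^2 = (Re z - c)^2 + (Im z)^2" by (simp add: cmod_power2)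
  have nw: "(cmod w)^2 = (Re w)^2 + (Im w)^2" by (simp add: cmod_power2)
  have nz: "(cmod z)^2 = (Re z)^2 + (Im z)^2" by (simp add: cmod_power2)
  have ce: "c * (2 * (Re w - Re z)) = (cmod w)^2 - (cmod z)^2" unfolding c_def using False by simp
  have R2: "(cmod (w - of_real c))^2 = R^2"
    unfolding R_def hw hz using ce nw nz by (simp add: power2_eq_square algebra_simps)
  have Rpos: "R > 0" unfolding R_def using assms(1)
    by (metis Im_complex_of_real diff_zero minus_complex.sel(2) order_less_irrefl zero_less_norm_iff right_minus_eq)
  have key: "Re (mob 1 (-(c-R)) (-1) (c+R) a) = 0" if "(cmod (a - of_real c))^2 = R^2" for a
  proof -
    obtain x y where v: "a - of_real c = Complex x y" by (cases "a - of_real c")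
    have a: "a = Complex (x + c) y" using v by (simp add: complex_eq_iff)
    have xy: "x^2 + y^2 = R^2" using that v by (simp add: cmod_power2)
    have "Re (mob 1 (-(c-R)) (-1) (c+R) a) = ((x+R)*(R-x) - y^2) / ((R-x)^2 + y^2)"
      unfolding mob_def a by (simp add: Re_divide power2_eq_square algebra_simps)
    also have "(x+R)*(R-x) - y^2 = 0" using xy by (simp add: power2_eq_square algebra_simps)
    finally show ?thesis by simp
  qed
  show ?thesis
    by (rule exI[of _ 1], rule exI[of _ "-(c-R)"], rule exI[of _ "-1"], rule exI[of _ "c+R"])
       (use Rpos key R2 R_def in auto)
qed

lemma dH_scale:
  assumes "Im m > 0" "q > 0"
  shows "dH (of_real (exp s) * m) (\<i> * of_real q) = arcosh (cmod m / Im m * cosh (s + ln (cmod m) - ln q))"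
proof -
  obtain x y where m: "m = Complex x y" by (cases m)
  have y: "y > 0" using assms m by simp
  have cm: "cmod m > 0" using y m by (metis assms(1) less_irrefl zero_complex.sel(2) zero_less_norm_iff)
  have e1: "exp (s + ln (cmod m) - ln q) = exp s * cmod m / q" using cm assms by (simp add: exp_add exp_diff)
  have e2: "exp (-(s + ln (cmod m) - ln q)) = q / (exp s * cmod m)" using cm assms by (simp add: exp_add exp_diff exp_minus field_simps)
  have c2: "(cmod m)^2 = x^2 + y^2" using m by (simp add: cmod_power2)
  have d2: "(cmod (of_real (exp s) * m - \<i> * of_real q))^2 = (exp s * x)^2 + (exp s * y - q)^2"
    by (simp add: m cmod_power2)
  have gen: "\<And>E r x y q::real. E > 0 \<Longrightarrow> r > 0 \<Longrightarrow> y > 0 \<Longrightarrow> q > 0 \<Longrightarrow> r^2 = x^2+y^2 \<Longrightarrow>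
     1 + ((E*x)^2 + (E*y-q)^2) / (2 * (E*y) * q) = r / y * ((E * r / q + q / (E * r)) / 2)"
    by (simp add: field_simps power2_eq_square)
  have "1 + (cmod (of_real (exp s) * m - \<i> * of_real q))^2 / (2 * Im (of_real (exp s) * m) * Im (\<i> * of_real q))
      = cmod m / Im m * cosh (s + ln (cmod m) - ln q)"
    unfolding cosh_def e1 e2 d2 using gen[of "exp s" "cmod m" y q x] y cm assms c2 m by simp
  thus ?thesis unfolding dH_def by simp
qed


context
  fixes c :: real
  assumes c1: "c > 1"
begin

definition "ww v = arcosh (c * cosh v)"
definition "wp v = c * sinh v / sqrt ((c * cosh v)^2 - 1)"
definition "hh v = ww v * wp v"

lemma cc_gt1: "c * cosh v > 1"
proof -
  have "c * 1 \<le> c * cosh v" using c1 cosh_real_ge_1[of v] by (intro mult_left_mono) auto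
  thus ?thesis using c1 by linarith
qed

lemma ww_pos: "ww v > 0" unfolding ww_def using cc_gt1[of v] by simp

lemma ww_even: "ww (-v) = ww v" unfolding ww_def by simp
lemma wp_odd: "wp (-v) = - wp v" unfolding wp_def by simp
lemma hh_odd: "hh (-v) = - hh v" unfolding hh_def ww_even wp_odd by simp

lemma sq_pos: "(c * cosh v)^2 - 1 > 0"
proof -
  have "1 < c * cosh v" by (rule cc_gt1)
  hence "1 * 1 < (c * cosh v) * (c * cosh v)" by (intro mult_strict_mono) auto
  thus ?thesis by (simp add: power2_eq_square)
qed

lemma wp_pos: "v > 0 \<Longrightarrow> wp v > 0" unfolding wp_def using sq_pos[of v] c1 by simp

lemma wp_mono: assumes "0 \<le> v" "v \<le> v'" shows "wp v \<le> wp v'"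
proof -
  define t where "t = sinh v"
  define t' where "t' = sinh v'"
  define K where "K = c^2 - 1"
  have K: "K > 0" unfolding K_def using c1 by (simp add: power2_eq_square) (metis c1 less_1_mult)
  have t: "0 \<le> t" "t \<le> t'" unfolding t_def t'_def using assms by auto
  have e: "(c * cosh u)^2 - 1 = c^2 * (sinh u)^2 + K" for u
    unfolding K_def by (simp add: power_mult_distrib cosh_square_eq algebra_simps)
  have "t^2 * (c^2 * t'^2 + K) \<le> t'^2 * (c^2 * t^2 + K)"
  proof -
    have "t^2 \<le> t'^2" using t by (intro power_mono) auto
    hence "t^2 * K \<le> t'^2 * K" using K by simp
    thus ?thesis by (simp add: algebra_simps)
  qed
  hence "sqrt (t^2 * (c^2 * t'^2 + K)) \<le> sqrt (t'^2 * (c^2 * t^2 + K))" by simp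
  hence "t * sqrt (c^2 * t'^2 + K) \<le> t' * sqrt (c^2 * t^2 + K)"
    using t by (simp add: real_sqrt_mult)
  moreover have "sqrt (c^2 * t'^2 + K) > 0" "sqrt (c^2 * t^2 + K) > 0"
    using K by (auto intro!: add_nonneg_pos)
  ultimately have "t / sqrt (c^2 * t^2 + K) \<le> t' / sqrt (c^2 * t'^2 + K)"
    by (simp add: divide_simps mult.commute)
  hence "c * (t / sqrt (c^2 * t^2 + K)) \<le> c * (t' / sqrt (c^2 * t'^2 + K))"
    using c1 by (intro mult_left_mono) auto
  thus ?thesis unfolding wp_def e t_def t'_def by simp
qed

lemma ww_mono: assumes "0 \<le> v" "v < v'" shows "ww v < ww v'"
proof -
  have "cosh v < cosh v'" using assms by (simp add: cosh_real_nonneg_less_iff)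
  hence "c * cosh v < c * cosh v'" using c1 by simp
  thus ?thesis unfolding ww_def using cc_gt1[of v] by simp
qed

lemma hh_mono_pos: assumes "0 \<le> v" "v < v'" shows "hh v < hh v'"
proof -
  have "hh v \<le> ww v * wp v'" unfolding hh_def
    using wp_mono[of v v'] assms ww_pos[of v] by (intro mult_left_mono) auto
  also have "\<dots> < ww v' * wp v'"
    using ww_mono[OF assms] wp_pos[of v'] assms by simp
  finally show ?thesis unfolding hh_def .
qed

lemma hh_0: "hh 0 = 0" by (simp add: hh_def wp_def)

lemma hh_neg: assumes "v < 0" shows "hh v < 0"
proof -
  have "hh 0 < hh (-v)" using assms by (intro hh_mono_pos) auto
  thus ?thesis using hh_0 hh_odd[of v] by simp
qed

lemma hh_mono: assumes "v < v'" shows "hh v < hh v'"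
proof (cases "0 \<le> v")
  case True thus ?thesis using hh_mono_pos assms by auto
next
  case False
  show ?thesis
  proof (cases "v' \<le> 0")
    case True
    have "hh (-v') < hh (-v)" using hh_mono_pos[of "-v'" "-v"] True assms by auto
    thus ?thesis using hh_odd[of v] hh_odd[of v'] by simp
  next
    case False2: False
    have "hh v < 0" using hh_neg \<open>\<not> 0 \<le> v\<close> by simp
    moreover have "0 \<le> hh v'" using hh_mono_pos[of 0 v'] hh_0 False2 by fastforce
    ultimately show ?thesis by simp
  qed
qed

lemma W_deriv: "((\<lambda>u. (arcosh (c * cosh (u - l)))^2) has_real_derivative 2 * hh (u - l)) (at u)"
proof -
  have i: "((\<lambda>u. c * cosh (u - l)) has_real_derivative c * sinh (u - l)) (at u)"
    by (auto intro!: derivative_eq_intros)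
  have F: "((\<lambda>u. arcosh (c * cosh (u - l))) has_real_derivative
     (1 / sqrt ((c * cosh (u - l))^2 - 1)) * (c * sinh (u - l))) (at u)"
    using DERIV_chain2[OF arcosh_real_has_field_derivative[OF cc_gt1] i] .
  have "((\<lambda>u. (arcosh (c * cosh (u - l)))^Suc 1) has_real_derivative
     (1 + of_nat 1) * (((1 / sqrt ((c * cosh (u - l))^2 - 1)) * (c * sinh (u - l))) * (arcosh (c * cosh (u - l)))^1)) (at u)"
    using DERIV_power_Suc[OF F, of 1] .
  thus ?thesis unfolding hh_def ww_def wp_def numeral_2_eq_2 by (simp add: algebra_simps)
qed

lemma psi_mono_gt1: assumes "l1 < l2" "u < u'"
  shows "(arcosh (c * cosh (u - l1)))^2 - (arcosh (c * cosh (u - l2)))^2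
       < (arcosh (c * cosh (u' - l1)))^2 - (arcosh (c * cosh (u' - l2)))^2"
  apply (rule DERIV_pos_imp_increasing[OF assms(2)])
  apply (rule exI, rule conjI, rule DERIV_diff[OF W_deriv W_deriv])
  using hh_mono assms by simp
end

lemma psi_mono: fixes c l1 l2 u u' :: real assumes "c \<ge> 1" "l1 < l2" "u < u'"
  shows "(arcosh (c * cosh (u - l1)))^2 - (arcosh (c * cosh (u - l2)))^2
       < (arcosh (c * cosh (u' - l1)))^2 - (arcosh (c * cosh (u' - l2)))^2"
proof (cases "c = 1")
  case True
  have a: "arcosh (cosh v) = \<bar>v\<bar>" for v :: real
    by (metis arcosh_cosh_real abs_ge_zero cosh_real_abs)
  have "(u - l1)^2 - (u - l2)^2 < (u' - l1)^2 - (u' - l2)^2"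
  proof -
    have "(u - l1)^2 - (u - l2)^2 = 2*u*(l2-l1) + l1^2 - l2^2" by (simp add: power2_eq_square algebra_simps)
    moreover have "(u' - l1)^2 - (u' - l2)^2 = 2*u'*(l2-l1) + l1^2 - l2^2" by (simp add: power2_eq_square algebra_simps)
    moreover have "2*u*(l2-l1) < 2*u'*(l2-l1)" using assms by simp
    ultimately show ?thesis by simp
  qed
  thus ?thesis using True by (simp add: a)
next
  case False
  thus ?thesis using psi_mono_gt1[of c l1 l2 u u'] assms by simp
qed


definition phi :: "complex \<Rightarrow> complex \<Rightarrow> complex \<Rightarrow> real" where
  "phi z w a = (dH a z)^2 - (dH a w)^2"

lemma continuous_mob:
  assumes "A*D - B*C > 0" "continuous_on S f" "\<And>s. s \<in> S \<Longrightarrow> Im (f s) > 0"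
  shows "continuous_on S (\<lambda>s. mob A B C D (f s))"
  unfolding mob_def using assms mob_den_nz
  by (auto intro!: continuous_intros)

lemma flow:
  assumes "Im z > 0" "Im w > 0" "z \<noteq> w"
  shows "\<exists>T::real \<Rightarrow> complex \<Rightarrow> complex. (\<forall>s a. Im a > 0 \<longrightarrow> Im (T s a) > 0) \<and> (\<forall>a. Im a > 0 \<longrightarrow> T 0 a = a)
     \<and> (\<forall>a. Im a > 0 \<longrightarrow> continuous_on UNIV (\<lambda>s. T s a))
     \<and> (\<forall>a. Im a > 0 \<longrightarrow> strict_mono (\<lambda>s. phi z w (T s a)))
     \<and> (\<forall>a. Im a > 0 \<longrightarrow> (\<exists>s. phi z w (T s a) = 0))"
proof -
  obtain A B C D where det: "A*D - B*C > 0" and rz: "Re (mob A B C D z) = 0" and rw: "Re (mob A B C D w) = 0"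
    using normalize[OF assms] by blast
  define M where "M = mob A B C D"
  define Mi where "Mi = mob D (-B) (-C) A"
  have deti: "D*A - (-B)*(-C) > 0" using det by (simp add: algebra_simps)
  define q1 where "q1 = Im (M z)"
  define q2 where "q2 = Im (M w)"
  have q1: "q1 > 0" unfolding q1_def M_def using mob_H2[OF assms(1) det] .
  have q2: "q2 > 0" unfolding q2_def M_def using mob_H2[OF assms(2) det] .
  have Mz: "M z = \<i> * of_real q1" using rz unfolding q1_def M_def by (simp add: complex_eq_iff)
  have Mw: "M w = \<i> * of_real q2" using rw unfolding q2_def M_def by (simp add: complex_eq_iff)
  have inv: "Mi (M a) = a" if "Im a > 0" for a unfolding Mi_def M_def using mob_inv[OF that det] .
  have q12: "q1 \<noteq> q2"
  proof
    assume "q1 = q2" hence "M z = M w" using Mz Mw by simp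
    hence "Mi (M z) = Mi (M w)" by simp
    thus False using inv assms by simp
  qed
  define T0 where "T0 s a = Mi (of_real (exp s) * M a)" for s a
  define Psi where "Psi c l1 l2 u = (arcosh (c * cosh (u - l1)))^2 - (arcosh (c * cosh (u - l2)))^2" for c l1 l2 u :: real
  have H0: "Im (of_real (exp s) * M a) > 0" if "Im a > 0" for s a
    using mob_H2[OF that det] unfolding M_def by simp
  have H: "Im (T0 s a) > 0" if "Im a > 0" for s a
    unfolding T0_def Mi_def using mob_H2[OF H0[OF that] deti] .
  have dist: "dH (T0 s a) u = arcosh (cmod (M a) / Im (M a) * cosh (s + ln (cmod (M a)) - ln q))"
    if "Im a > 0" "Im u > 0" "M u = \<i> * of_real q" "q > 0" for s a u q
  proof -
    have "dH (T0 s a) u = dH (Mi (of_real (exp s) * M a)) (Mi (M u))" unfolding T0_def inv[OF that(2)] ..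
    also have "\<dots> = dH (of_real (exp s) * M a) (M u)"
      unfolding Mi_def by (rule mob_dH[OF H0[OF that(1)] _ deti]) (simp add: that(3,4))
    also have "\<dots> = arcosh (cmod (M a) / Im (M a) * cosh (s + ln (cmod (M a)) - ln q))"
      unfolding that(3) by (rule dH_scale) (use that mob_H2[OF that(1) det] M_def in auto)
    finally show ?thesis .
  qed
  have phiT: "phi z w (T0 s a) = Psi (cmod (M a) / Im (M a)) (ln q1) (ln q2) (s + ln (cmod (M a)))"
    if "Im a > 0" for s a
    unfolding phi_def Psi_def dist[OF that assms(1) Mz q1] dist[OF that assms(2) Mw q2]
    by (simp add: algebra_simps)
  have cge: "cmod (M a) / Im (M a) \<ge> 1" if "Im a > 0" for a
    using mob_H2[OF that det] abs_Im_le_cmod[of "M a"] unfolding M_def by simp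
  have Psi_anti: "Psi c l1 l2 u = - Psi c l2 l1 u" for c l1 l2 u unfolding Psi_def by simp
  have Psi_zero: "Psi c l1 l2 ((l1 + l2)/2) = 0" for c l1 l2
  proof -
    have "(l1+l2)/2 - l2 = - ((l1+l2)/2 - l1)" by (simp add: field_simps)
    hence "cosh ((l1+l2)/2 - l2) = cosh ((l1+l2)/2 - l1)" by (metis cosh_minus)
    thus ?thesis unfolding Psi_def by (simp only:)
  qed
  have cont0: "continuous_on UNIV (\<lambda>s. T0 s a)" if "Im a > 0" for a
    unfolding T0_def Mi_def
    by (rule continuous_mob[OF deti]) (use H0[OF that] in \<open>auto intro!: continuous_intros\<close>)
  show ?thesis
  proof (cases "q1 < q2")
    case True
    have l: "ln q1 < ln q2" using True q1 q2 by simp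
    show ?thesis
    proof (intro exI[of _ T0] conjI allI impI)
      fix s a assume "Im (a::complex) > 0" thus "Im (T0 s a) > 0" by (rule H)
    next
      fix a :: complex assume "Im a > 0" thus "T0 0 a = a" unfolding T0_def using inv by simp
    next
      fix a :: complex assume "Im a > 0" thus "continuous_on UNIV (\<lambda>s. T0 s a)" by (rule cont0)
    next
      fix a :: complex assume a: "Im a > 0"
      show "strict_mono (\<lambda>s. phi z w (T0 s a))"
        unfolding strict_mono_def phiT[OF a] Psi_def
        using psi_mono[OF cge[OF a] l] by simp
    next
      fix a :: complex assume a: "Im a > 0"
      show "\<exists>s. phi z w (T0 s a) = 0"
        by (rule exI[of _ "(ln q1 + ln q2)/2 - ln (cmod (M a))"]) (simp add: phiT[OF a] Psi_zero)
    qed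
  next
    case False
    have l: "ln q2 < ln q1" using False q12 q1 q2 by simp
    show ?thesis
    proof (intro exI[of _ "\<lambda>s. T0 (-s)"] conjI allI impI)
      fix s a assume "Im (a::complex) > 0" thus "Im (T0 (-s) a) > 0" by (rule H)
    next
      fix a :: complex assume "Im a > 0" thus "T0 (-0) a = a" unfolding T0_def using inv by simp
    next
      fix a :: complex assume "Im a > 0" thus "continuous_on UNIV (\<lambda>s. T0 (-s) a)"
        using continuous_on_compose2[OF cont0[of a] continuous_on_minus[OF continuous_on_id]] by auto
    next
      fix a :: complex assume a: "Im a > 0"
      show "strict_mono (\<lambda>s. phi z w (T0 (-s) a))"
        unfolding strict_mono_def phiT[OF a]
      proof (intro allI impI)
        fix x y :: real assume "x < y"
        hence "-y + ln (cmod (M a)) < -x + ln (cmod (M a))" by simp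
        from psi_mono[OF cge[OF a] l this]
        show "Psi (cmod (M a) / Im (M a)) (ln q1) (ln q2) (- x + ln (cmod (M a)))
          < Psi (cmod (M a) / Im (M a)) (ln q1) (ln q2) (- y + ln (cmod (M a)))"
          unfolding Psi_def by simp
      qed
    next
      fix a :: complex assume a: "Im a > 0"
      show "\<exists>s. phi z w (T0 (-s) a) = 0"
        by (rule exI[of _ "-((ln q1 + ln q2)/2 - ln (cmod (M a)))"]) (simp add: phiT[OF a] Psi_zero)
    qed
  qed
qed


lemma cont_dH:
  assumes "continuous_on S f" "\<And>t. t \<in> S \<Longrightarrow> Im (f t) > 0" "Im c > 0"
  shows "continuous_on S (\<lambda>t. dH (f t) c)"
  unfolding dH_def
proof (rule continuous_on_compose2[OF continuous_on_arcosh[OF order.refl]])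
  show "continuous_on S (\<lambda>t. 1 + (cmod (f t - c))\<^sup>2 / (2 * Im (f t) * Im c))"
    using assms by (auto intro!: continuous_intros dest: assms(2))
  show "(\<lambda>t. 1 + (cmod (f t - c))\<^sup>2 / (2 * Im (f t) * Im c)) ` S \<subseteq> {1..}"
    using assms by (auto intro!: divide_nonneg_pos dest: assms(2))
qed

lemma cont_rho:
  assumes "continuous_on S P" "\<And>t. t \<in> S \<Longrightarrow> P t \<in> HH" "c \<in> HH"
  shows "continuous_on S (\<lambda>t. rho (P t) c)"
proof -
  have "continuous_on S (\<lambda>t. fst (P t))" "continuous_on S (\<lambda>t. snd (P t))"
    using assms(1) by (auto intro!: continuous_intros)
  moreover have "\<And>t. t \<in> S \<Longrightarrow> Im (fst (P t)) > 0 \<and> Im (snd (P t)) > 0"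
    using assms(2) unfolding HH_def H2_def by (auto simp: mem_Times_iff)
  moreover have "Im (fst c) > 0" "Im (snd c) > 0" using assms(3) unfolding HH_def H2_def by (auto simp: mem_Times_iff)
  ultimately show ?thesis unfolding rho_def using assms(1)
    by (intro continuous_intros cont_dH) auto
qed

lemma cont_phi:
  assumes "continuous_on S f" "\<And>t. t \<in> S \<Longrightarrow> Im (f t) > 0" "Im z > 0" "Im w > 0"
  shows "continuous_on S (\<lambda>t. phi z w (f t))"
  unfolding phi_def using assms by (intro continuous_intros cont_dH) auto

lemma bisector_iff:
  "p \<in> bisector x y \<longleftrightarrow> p \<in> HH \<and> phi (fst x) (fst y) (fst p) = phi (snd y) (snd x) (snd p)"
proof -
  have "rho p x = rho p y \<longleftrightarrow>
     (dH (fst p) (fst x))^2 + (dH (snd p) (snd x))^2 = (dH (fst p) (fst y))^2 + (dH (snd p) (snd y))^2"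
    unfolding rho_def by (simp add: real_sqrt_eq_iff)
  thus ?thesis unfolding bisector_def phi_def by auto
qed

lemma spine_iff:
  "p \<in> spine x y \<longleftrightarrow> p \<in> HH \<and> phi (fst x) (fst y) (fst p) = 0 \<and> phi (snd y) (snd x) (snd p) = 0"
  unfolding spine_def Ek_def Sk_def HH_def phi_def by (cases p) auto

lemma HH_Im: "p \<in> HH \<longleftrightarrow> Im (fst p) > 0 \<and> Im (snd p) > 0"
  unfolding HH_def H2_def by (cases p) auto

lemma connect:
  assumes x: "x \<in> HH" and y: "y \<in> HH" and d1: "fst x \<noteq> fst y" and d2: "snd x \<noteq> snd y"
    and p: "p \<in> bisector x y"
  shows "\<exists>P. continuous_on {0..1::real} P \<and> (\<forall>t\<in>{0..1}. P t \<in> bisector x y) \<and> P 0 = p \<and> P 1 \<in> spine x y"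
proof -
  obtain x1 x2 where xx: "x = (x1, x2)" by (cases x)
  obtain y1 y2 where yy: "y = (y1, y2)" by (cases y)
  obtain p1 p2 where pp: "p = (p1, p2)" by (cases p)
  have ix: "Im x1 > 0" "Im x2 > 0" using x xx HH_Im by auto
  have iy: "Im y1 > 0" "Im y2 > 0" using y yy HH_Im by auto
  have pH: "p \<in> HH" using p unfolding bisector_def by auto
  have ip: "Im p1 > 0" "Im p2 > 0" using pH pp HH_Im by auto
  have d1': "x1 \<noteq> y1" and d2': "y2 \<noteq> x2" using d1 d2 xx yy by auto
  obtain T1 :: "real \<Rightarrow> complex \<Rightarrow> complex" where
    T1: "\<And>s a. Im a > 0 \<Longrightarrow> Im (T1 s a) > 0" "\<And>a. Im a > 0 \<Longrightarrow> T1 0 a = a"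
        "\<And>a. Im a > 0 \<Longrightarrow> continuous_on UNIV (\<lambda>s. T1 s a)"
        "\<And>a. Im a > 0 \<Longrightarrow> strict_mono (\<lambda>s. phi x1 y1 (T1 s a))"
        "\<And>a. Im a > 0 \<Longrightarrow> \<exists>s. phi x1 y1 (T1 s a) = 0"
    using flow[OF ix(1) iy(1) d1'] by blast
  obtain T2 :: "real \<Rightarrow> complex \<Rightarrow> complex" where
    T2: "\<And>s a. Im a > 0 \<Longrightarrow> Im (T2 s a) > 0" "\<And>a. Im a > 0 \<Longrightarrow> T2 0 a = a"
        "\<And>a. Im a > 0 \<Longrightarrow> continuous_on UNIV (\<lambda>s. T2 s a)"
        "\<And>a. Im a > 0 \<Longrightarrow> strict_mono (\<lambda>s. phi y2 x2 (T2 s a))"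
        "\<And>a. Im a > 0 \<Longrightarrow> \<exists>s. phi y2 x2 (T2 s a) = 0"
    using flow[OF iy(2) ix(2) d2'] by blast
  define f where "f s = phi x1 y1 (T1 s p1)" for s
  define g where "g s = phi y2 x2 (T2 s p2)" for s
  define k where "k = f 0"
  have gk: "g 0 = k" unfolding k_def f_def g_def using T1(2)[OF ip(1)] T2(2)[OF ip(2)]
    using p pp xx yy by (simp add: bisector_iff)
  obtain ss where fs: "f ss = 0" using T1(5)[OF ip(1)] f_def by auto
  obtain ts where gt: "g ts = 0" using T2(5)[OF ip(2)] g_def by auto
  have fm: "strict_mono f" unfolding f_def using T1(4)[OF ip(1)] .
  have gm: "strict_mono g" unfolding g_def using T2(4)[OF ip(2)] .
  have fc: "continuous_on UNIV f" unfolding f_def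
    by (rule cont_phi[OF T1(3)[OF ip(1)]]) (use T1(1) ip ix iy in auto)
  have gc: "continuous_on UNIV g" unfolding g_def
    by (rule cont_phi[OF T2(3)[OF ip(2)]]) (use T2(1) ip ix iy in auto)
  define J where "J = {min 0 ts .. max 0 ts}"
  define I where "I = {min 0 ss .. max 0 ss}"
  have ginj: "inj_on g J" using strict_mono_imp_inj_on[OF gm] by (simp add: inj_on_def)
  define gi where "gi = the_inv_into J g"
  have gi_g: "\<forall>t\<in>J. gi (g t) = t" unfolding gi_def using the_inv_into_f_f[OF ginj] by auto
  have gic: "continuous_on (g ` J) gi"
    by (rule continuous_on_inv) (use gc gi_g in \<open>auto simp: J_def intro: continuous_on_subset\<close>)
  have fI: "f s \<in> g ` J" if s: "s \<in> I" for s
  proof -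
    have between: "min k 0 \<le> f s \<and> f s \<le> max k 0"
    proof (cases "0 \<le> ss")
      case True
      hence "0 \<le> s" "s \<le> ss" using s I_def by auto
      hence "f 0 \<le> f s" "f s \<le> f ss" using fm by (auto simp: strict_mono_less_eq)
      thus ?thesis using fs k_def by auto
    next
      case False
      hence "ss \<le> s" "s \<le> 0" using s I_def by auto
      hence "f ss \<le> f s" "f s \<le> f 0" using fm by (auto simp: strict_mono_less_eq)
      thus ?thesis using fs k_def by auto
    qed
    show ?thesis
    proof (cases "k \<le> 0")
      case True
      hence "g 0 \<le> g ts" using gk gt by simp
      hence t0: "0 \<le> ts" using gm by (simp add: strict_mono_less_eq)
      have "\<exists>t. 0 \<le> t \<and> t \<le> ts \<and> g t = f s"
        by (rule IVT') (use between True gk gt t0 gc in \<open>auto intro: continuous_on_subset\<close>)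
      thus ?thesis using t0 J_def by force
    next
      case False
      hence "g ts \<le> g 0" using gk gt by simp
      hence t0: "ts \<le> 0" using gm by (simp add: strict_mono_less_eq)
      have "\<exists>t. ts \<le> t \<and> t \<le> 0 \<and> g t = f s"
        by (rule IVT') (use between False gk gt t0 gc in \<open>auto intro: continuous_on_subset\<close>)
      thus ?thesis using t0 J_def by force
    qed
  qed
  define sig where "sig s = gi (f s)" for s
  have sigJ: "sig s \<in> J" and gsig: "g (sig s) = f s" if sI: "s \<in> I" for s
  proof -
    obtain t where t: "t \<in> J" "f s = g t" using fI[OF sI] by auto
    show "sig s \<in> J" "g (sig s) = f s" unfolding sig_def t(2) using gi_g t(1) by auto
  qed
  have sigc: "continuous_on I sig" unfolding sig_def
    by (rule continuous_on_compose2[OF gic]) (use fc fI in \<open>auto intro: continuous_on_subset\<close>)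
  define P where "P t = (T1 (t * ss) p1, T2 (sig (t * ss)) p2)" for t
  have tI: "t * ss \<in> I" if "t \<in> {0..1}" for t
  proof -
    have "0 \<le> t" "t \<le> 1" using that by auto
    thus ?thesis unfolding I_def
      by (cases "0 \<le> ss") (auto intro: mult_left_le_one_le mult_nonneg_nonneg mult_nonneg_nonpos
           simp: mult_le_cancel_right1 mult_left_le_one_le mult_le_0_iff)
  qed
  have Pc: "continuous_on {0..1} P" unfolding P_def
  proof (intro continuous_on_Pair)
    show "continuous_on {0..1} (\<lambda>t. T1 (t * ss) p1)"
      by (rule continuous_on_compose2[OF T1(3)[OF ip(1)]]) (auto intro!: continuous_intros)
    have "continuous_on {0..1} (\<lambda>t. sig (t * ss))"
      by (rule continuous_on_compose2[OF sigc]) (auto intro!: continuous_intros tI)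
    thus "continuous_on {0..1} (\<lambda>t. T2 (sig (t * ss)) p2)"
      by (rule continuous_on_compose2[OF T2(3)[OF ip(2)]]) auto
  qed
  have PB: "P t \<in> bisector x y" if "t \<in> {0..1}" for t
    unfolding bisector_iff P_def xx yy using gsig[OF tI[OF that]] T1(1)[OF ip(1)] T2(1)[OF ip(2)]
    by (simp add: HH_Im f_def g_def)
  have "sig 0 = 0" using gi_g gk k_def unfolding sig_def J_def by (metis atLeastAtMost_iff max.cobounded1 min.cobounded1)
  hence P0: "P 0 = p" unfolding P_def pp using T1(2)[OF ip(1)] T2(2)[OF ip(2)] by simp
  have "1 * ss \<in> I" using tI[of 1] by auto
  hence P1: "P 1 \<in> spine x y"
    unfolding spine_iff P_def xx yy using gsig[of ss] fs T1(1)[OF ip(1)] T2(1)[OF ip(2)]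
    by (simp add: HH_Im f_def g_def)
  show ?thesis using Pc PB P0 P1 by blast
qed


theorem mainTheorem3:
  fixes x y :: "complex \<times> complex"
    and g :: "complex \<times> complex \<Rightarrow> complex \<times> complex"
  assumes "x \<in> HH" and "y \<in> HH"
    and "fst x \<noteq> fst y" and "snd x \<noteq> snd y"
    and "isometry_HH g"
    and "bisector x y \<inter> bisector x (g x) = {}"
    and "bisector x y \<inter> bisector x (iso_inv g x) = {}"
  shows "set_invisible g x (bisector x y) \<longleftrightarrow> set_invisible g x (spine x y)"
proof
  have sub: "spine x y \<subseteq> bisector x y" by (auto simp: spine_iff bisector_iff)
  show "set_invisible g x (bisector x y) \<Longrightarrow> set_invisible g x (spine x y)"
    using sub unfolding set_invisible_def by blast
next
  assume inv: "set_invisible g x (spine x y)"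
  have bij: "bij_betw g HH HH" using assms(5) unfolding isometry_HH_def by simp
  have gx: "g x \<in> HH" using bij assms(1) by (meson bij_betwE)
  have gix: "iso_inv g x \<in> HH" unfolding iso_inv_def
    using bij assms(1) by (metis bij_betw_def the_inv_into_into order_refl)
  show "set_invisible g x (bisector x y)"
    unfolding set_invisible_def
  proof (intro ballI notI)
    fix p assume p: "p \<in> bisector x y" and vis: "visible g x p"
    obtain P where Pc: "continuous_on {0..1::real} P" and PB: "\<forall>t\<in>{0..1}. P t \<in> bisector x y"
      and P0: "P 0 = p" and P1: "P 1 \<in> spine x y"
      using connect[OF assms(1-4) p] by blast
    have PH: "\<And>t. t \<in> {0..1} \<Longrightarrow> P t \<in> HH" using PB unfolding bisector_def by auto
    have side: "rho (P 1) x \<le> rho (P 1) c"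
      if c: "c \<in> HH" and disj: "bisector x y \<inter> bisector x c = {}" and v0: "rho p x \<le> rho p c" for c
    proof (rule ccontr)
      assume neg: "\<not> rho (P 1) x \<le> rho (P 1) c"
      define F where "F t = rho (P t) x - rho (P t) c" for t
      have Fc: "continuous_on {0..1} F" unfolding F_def
        by (intro continuous_intros cont_rho[OF Pc PH] c assms(1)) auto
      have "\<exists>t. 0 \<le> t \<and> t \<le> 1 \<and> F t = 0"
        by (rule IVT') (use Fc v0 P0 neg in \<open>auto simp: F_def\<close>)
      then obtain t where t: "t \<in> {0..1}" "F t = 0" by auto
      hence "P t \<in> bisector x c" using PH[OF t(1)] unfolding bisector_def F_def by auto
      thus False using PB t(1) disj by blast
    qed
    have "visible g x (P 1)" unfolding visible_def
      using side[OF gx assms(6)] side[OF gix assms(7)] vis unfolding visible_def by auto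
    thus False using inv P1 unfolding set_invisible_def by blast
  qed
qed

end
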